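(* Let $n=2^s$, $q=2^r$ ($s,r$ positive integers). For $\beta\in\mathbb{F}_q$ let \[ \delta(n-1,q;\beta)=|\{(\alpha_1,\dots,\alpha_{n-1})\in(\mathbb{F}_q^* )^{n-1}:\alpha_1+\cdots+\alpha_{n-1}+\alpha_1^{-1}\cdots\alpha_{n-1}^{-1}=\beta\}|. \] Then $\delta(n-1,q;0)=q^{-1}\{(q-1)^{n-1}+1\}$, and for $\beta\in\mathbb{F}_q^*$, \[ \delta(n-1,q;\beta)=K_{n-2}(\lambda;\beta^{-1})+q^{-1}\{(q-1)^{n-1}+1\}. \]
   Context: $\mathbb{F}_q$ is the field with $q$ elements, $tr$ the absolute trace to $\mathbb{F}_2$, $\lambda(x)=(-1)^{tr(x)}$. For $m\ge1$ and $a\in\mathbb{F}_q^*$, $K_m(\lambda;a)=\sum_{\alpha_1,\dots,\alpha_m\in\mathbb{F}_q^*}\lambda(\alpha_1+\cdots+\alpha_m+a\alpha_1^{-1}\cdots\alpha_m^{-1})$; by convention $K_0(\lambda;a)=\lambda(a)$. *)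

theory Defs
  imports "HOL-Library.FuncSet" "HOL-Library.Cardinality" Complex_Main
begin

definition abs_tr :: "nat \<Rightarrow> 'a::field \<Rightarrow> 'a" where
  "abs_tr r x = (\<Sum>i<r. x ^ (2 ^ i))"

text \<open>Canonical additive character lambda(x) = (-1)^tr(x); tr(x) lies in F_2 = {0,1}.\<close>
definition lam :: "nat \<Rightarrow> 'a::field \<Rightarrow> real" where
  "lam r x = (if abs_tr r x = 0 then 1 else -1)"

definition nz_tuples :: "nat \<Rightarrow> (nat \<Rightarrow> 'a::field) set" where
  "nz_tuples m = PiE {..<m} (\<lambda>_. UNIV - {0})"

definition Kl :: "nat \<Rightarrow> nat \<Rightarrow> 'a::{field,finite} \<Rightarrow> real" where
  "Kl r m a = (if m = 0 then lam r a else
     (\<Sum>\<alpha>\<in>nz_tuples m. lam r ((\<Sum>i<m. \<alpha> i) + a * (\<Prod>i<m. inverse (\<alpha> i)))))"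

definition delta :: "nat \<Rightarrow> 'a::{field,finite} \<Rightarrow> nat" where
  "delta m \<beta> = card {\<alpha>\<in>nz_tuples m. (\<Sum>i<m. \<alpha> i) + (\<Prod>i<m. inverse (\<alpha> i)) = \<beta>}"

end

theory Submission
  imports Defs "HOL-Computational_Algebra.Polynomial"
begin

lemma card_one_zero: "of_nat CARD('a::{field,finite}) = (0::'a)"
proof -
  have "(\<Sum>x\<in>(UNIV::'a set). x + 1) = (\<Sum>x\<in>UNIV. x)"
    by (rule sum.reindex_bij_witness[of _ "\<lambda>x. x - 1" "\<lambda>x. x + 1"]) auto
  then show ?thesis by (simp add: sum.distrib)
qed

lemma char2:
  assumes "CARD('a::{field,finite}) = 2 ^ r"
  shows "(2::'a) = 0"
proof -
  have "(2::'a) ^ r = 0" using card_one_zero[where 'a='a] assms by simp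
  then show ?thesis by simp
qed

lemma fermat_nz:
  fixes x :: "'a::{field,finite}"
  assumes "x \<noteq> 0"
  shows "x ^ (CARD('a) - 1) = 1"
proof -
  let ?U = "UNIV - {0::'a}"
  have "(\<Prod>y\<in>?U. x * y) = (\<Prod>y\<in>?U. y)"
    by (rule prod.reindex_bij_witness[of _ "\<lambda>y. y / x" "\<lambda>y. x * y"]) (use assms in auto)
  moreover have "(\<Prod>y\<in>?U. x * y) = x ^ card ?U * (\<Prod>y\<in>?U. y)"
    by (simp add: prod.distrib)
  moreover have "(\<Prod>y\<in>?U. y) \<noteq> 0" by simp
  moreover have "card ?U = CARD('a) - 1" by (simp add: card_Diff_subset)
  ultimately show ?thesis by simp
qed

lemma fermat:
  fixes x :: "'a::{field,finite}"
  shows "x ^ CARD('a) = x"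
proof (cases "x = 0")
  case True then show ?thesis by simp
next
  case False
  have "CARD('a) = Suc (CARD('a) - 1)" by simp
  then have "x ^ CARD('a) = x * x ^ (CARD('a) - 1)" by (metis power_Suc)
  then show ?thesis using fermat_nz[OF False] by simp
qed

context
  fixes r :: nat
  assumes cardq: "CARD('a::{field,finite}) = 2 ^ r" and rpos: "r > 0"
begin

lemma two0: "(2::'a) = 0" using char2[OF cardq] .

lemma add_self: "(x::'a) + x = 0"
  using two0 by (metis mult_2 mult_zero_left)

lemma neg_self: "- (x::'a) = x"
  using add_self by (metis add_eq_0_iff)

lemma sq_add: "((x::'a) + y) ^ 2 = x ^ 2 + y ^ 2"
proof -
  have "(x + y) ^ 2 = x^2 + y^2 + 2 * x * y" by (simp add: power2_eq_square algebra_simps)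
  then show ?thesis using two0 by simp
qed

lemma pow2_add: "((x::'a) + y) ^ (2 ^ k) = x ^ (2 ^ k) + y ^ (2 ^ k)"
proof (induction k)
  case 0 then show ?case by simp
next
  case (Suc k)
  have "(x + y) ^ (2 ^ Suc k) = ((x + y) ^ (2 ^ k)) ^ 2" by (simp add: power_mult[symmetric] mult.commute)
  also have "\<dots> = (x ^ (2 ^ k)) ^ 2 + (y ^ (2 ^ k)) ^ 2" by (simp add: Suc sq_add)
  also have "\<dots> = x ^ (2 ^ Suc k) + y ^ (2 ^ Suc k)" by (simp add: power_mult[symmetric] mult.commute)
  finally show ?case .
qed

lemma pow2_sum: "(\<Sum>i\<in>A. (f i::'a)) ^ (2 ^ k) = (\<Sum>i\<in>A. f i ^ (2 ^ k))"
  by (induction A rule: infinite_finite_induct) (auto simp: pow2_add)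

lemma tr_add: "abs_tr r ((x::'a) + y) = abs_tr r x + abs_tr r y"
  by (simp add: abs_tr_def pow2_add sum.distrib)

lemma tr_sq_aux: "(\<Sum>i<r. (x::'a) ^ (2 ^ Suc i)) = abs_tr r x"
proof -
  have "(\<Sum>i<r. x ^ (2 ^ Suc i)) = (\<Sum>i\<in>{1..<Suc r}. x ^ (2 ^ i))"
    by (rule sum.reindex_bij_witness[of _ "\<lambda>i. i - 1" Suc]) auto
  also have "\<dots> = (\<Sum>i\<in>{1..<r}. x ^ (2 ^ i)) + x ^ (2 ^ r)" using rpos by simp
  also have "x ^ (2 ^ r) = x ^ (2 ^ 0)" using fermat[of x] cardq by simp
  also have "(\<Sum>i\<in>{1..<r}. x ^ (2 ^ i)) + x ^ (2 ^ 0) = (\<Sum>i<r. x ^ (2 ^ i))"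
    using rpos by (simp add: lessThan_atLeast0 sum.atLeast_Suc_lessThan)
  finally show ?thesis by (simp add: abs_tr_def)
qed

lemma tr_sq: "abs_tr r ((x::'a) ^ 2) = abs_tr r x"
  using tr_sq_aux[of x] by (simp add: abs_tr_def power_mult[symmetric] mult.commute)

lemma tr01: "abs_tr r (x::'a) = 0 \<or> abs_tr r x = 1"
proof -
  have "(abs_tr r x) ^ 2 = abs_tr r x"
    using pow2_sum[of "\<lambda>i. x ^ (2^i)" "{..<r}" 1] tr_sq_aux[of x]
    by (simp add: abs_tr_def power_mult[symmetric] mult.commute)
  then have "abs_tr r x * (abs_tr r x - 1) = 0" by (simp add: power2_eq_square algebra_simps)
  then show ?thesis by simp
qed

lemma lam_add: "lam r ((x::'a) + y) = lam r x * lam r y"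
  using tr01[of x] tr01[of y] two0 by (auto simp: lam_def tr_add)

lemma lam_sq: "lam r ((x::'a) ^ 2) = lam r x"
  by (simp add: lam_def tr_sq)

lemma lam_pow2: "lam r ((x::'a) ^ (2 ^ k)) = lam r x"
proof (induction k)
  case 0 then show ?case by simp
next
  case (Suc k)
  have "x ^ (2 ^ Suc k) = (x ^ (2 ^ k)) ^ 2" by (simp add: power_mult[symmetric] mult.commute)
  then show ?case using Suc lam_sq by simp
qed

lemma tr0: "abs_tr r (0::'a) = 0" by (simp add: abs_tr_def power_0_left)
lemma lam0: "lam r (0::'a) = 1" by (simp add: lam_def tr0)

lemma tr_nonzero: "\<exists>x::'a. abs_tr r x \<noteq> 0"
proof (rule ccontr)
  assume "\<not> ?thesis"
  then have all: "\<forall>x::'a. abs_tr r x = 0" by blast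
  define p :: "'a poly" where "p = (\<Sum>i<r. monom 1 (2 ^ i))"
  have ev: "poly p x = abs_tr r x" for x by (simp add: p_def abs_tr_def poly_sum poly_monom)
  have "coeff p (2 ^ (r - 1)) = (\<Sum>i<r. if 2 ^ (r-1) = (2::nat) ^ i then 1 else 0)"
    by (simp add: p_def coeff_sum coeff_monom)
  also have "\<dots> = (\<Sum>i\<in>{r-1}. 1)"
    by (rule sum.mono_neutral_cong_right) (use rpos in auto)
  finally have "coeff p (2 ^ (r - 1)) = 1" by simp
  then have pnz: "p \<noteq> 0" by auto
  have "degree p \<le> 2 ^ (r - 1)"
    unfolding p_def
    by (rule degree_sum_le) (auto intro: order.trans[OF degree_monom_le] simp: power_increasing)
  moreover have "card {x::'a. poly p x = 0} = 2 ^ r" using all cardq by (simp add: ev)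
  moreover have "(2::nat) ^ (r - 1) < 2 ^ r" using rpos by simp
  ultimately show False using card_poly_roots_bound[OF pnz] by linarith
qed

lemma sum_lam: "(\<Sum>x\<in>UNIV. lam r (x::'a)) = 0"
proof -
  obtain y :: 'a where y: "abs_tr r y \<noteq> 0" using tr_nonzero by blast
  then have ly: "lam r y = -1" by (simp add: lam_def)
  have "(\<Sum>x\<in>UNIV. lam r (x::'a)) = (\<Sum>x\<in>UNIV. lam r ((x::'a) + y))"
    by (rule sum.reindex_bij_witness[of _ "\<lambda>x. x + y" "\<lambda>x. x + y"]) (auto simp: add.assoc add_self)
  also have "\<dots> = - (\<Sum>x\<in>UNIV. lam r (x::'a))" by (simp add: lam_add ly sum_negf)
  finally show ?thesis by simp
qed

lemma sum_lam_nz: "(\<Sum>x\<in>UNIV-{0}. lam r (x::'a)) = -1"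
  using sum_lam by (simp add: sum_diff1 lam0)

lemma orth: "(\<Sum>x\<in>UNIV. lam r (c * (x::'a))) = (if c = 0 then real CARD('a) else 0)"
proof (cases "c = 0")
  case True then show ?thesis by (simp add: lam0)
next
  case False
  have "(\<Sum>x\<in>UNIV. lam r (c * (x::'a))) = (\<Sum>x\<in>UNIV. lam r (x::'a))"
    by (rule sum.reindex_bij_witness[of _ "\<lambda>x. x / c" "\<lambda>x. c * x"]) (use False in auto)
  then show ?thesis using sum_lam False by simp
qed

lemma orth_nz: "(\<Sum>x\<in>UNIV-{0}. lam r (c * (x::'a))) = (if c = 0 then real CARD('a) - 1 else -1)"
  using orth[of c] by (simp add: sum_diff1 lam0)

end

lemma nz_tuples_Suc:
  "nz_tuples (Suc m) = (\<lambda>(y, g). g(m := y)) ` ((UNIV - {0}) \<times> (nz_tuples m :: (nat \<Rightarrow> 'a::field) set))"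
  unfolding nz_tuples_def lessThan_Suc by (rule PiE_insert_eq)

lemma sum_tuples_Suc:
  "(\<Sum>\<alpha>\<in>nz_tuples (Suc m). f \<alpha>) = (\<Sum>x\<in>UNIV-{0::'a::{field,finite}}. \<Sum>g\<in>nz_tuples m. f (g(m := x)))"
proof -
  have inj: "inj_on (\<lambda>(y, g). g(m := y)) ((UNIV - {0}) \<times> (nz_tuples m :: (nat \<Rightarrow> 'a) set))"
    unfolding nz_tuples_def by (rule inj_combinator) simp
  have "(\<Sum>\<alpha>\<in>nz_tuples (Suc m). f \<alpha>) = (\<Sum>p\<in>(UNIV - {0}) \<times> (nz_tuples m :: (nat \<Rightarrow> 'a) set). f ((\<lambda>(y, g). g(m := y)) p))"
    unfolding nz_tuples_Suc by (rule sum.reindex[OF inj, unfolded comp_def])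
  also have "\<dots> = (\<Sum>x\<in>UNIV-{0::'a}. \<Sum>g\<in>nz_tuples m. f (g(m := x)))"
    unfolding sum.cartesian_product by (simp add: case_prod_unfold)
  finally show ?thesis by (simp add: split_beta)
qed

lemma upd_sum: "(\<Sum>i<Suc m. (g(m := x)) i) = (\<Sum>i<m. g i) + (x::'a::comm_monoid_add)"
proof -
  have "(\<Sum>i<m. (g(m := x)) i) = (\<Sum>i<m. g i)" by (rule sum.cong) auto
  then show ?thesis by simp
qed

lemma upd_prod: "(\<Sum>i<Suc m. f ((g(m := x)) i)) = (\<Sum>i<m. f (g i)) + (f x::'b::comm_monoid_add)"
proof -
  have "(\<Sum>i<m. f ((g(m := x)) i)) = (\<Sum>i<m. f (g i))" by (rule sum.cong) auto
  then show ?thesis by simp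
qed

lemma upd_prod2: "(\<Prod>i<Suc m. f ((g(m := x)) i)) = (\<Prod>i<m. f (g i)) * (f x::'b::comm_monoid_mult)"
proof -
  have "(\<Prod>i<m. f ((g(m := x)) i)) = (\<Prod>i<m. f (g i))" by (rule prod.cong) auto
  then show ?thesis by simp
qed

lemma card_tuples: "card (nz_tuples m :: (nat \<Rightarrow> 'a::{field,finite}) set) = (CARD('a) - 1) ^ m"
  by (simp add: nz_tuples_def card_PiE card_Diff_subset)

lemma finite_tuples: "finite (nz_tuples m :: (nat \<Rightarrow> 'a::{field,finite}) set)"
  by (simp add: nz_tuples_def finite_PiE)

lemma nz_tuples_nz: "\<alpha> \<in> nz_tuples m \<Longrightarrow> i < m \<Longrightarrow> \<alpha> i \<noteq> 0"
  by (auto simp: nz_tuples_def)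

lemma sum_tuples_reindex:
  fixes h :: "'a::{field,finite} \<Rightarrow> 'a"
  assumes bij: "bij_betw h (UNIV - {0}) (UNIV - {0})"
  shows "(\<Sum>\<alpha>\<in>nz_tuples m. f \<alpha>) = (\<Sum>\<gamma>\<in>nz_tuples m. f (restrict (h \<circ> \<gamma>) {..<m}))"
proof -
  define g where "g = inv_into (UNIV - {0}) h"
  have g: "bij_betw g (UNIV - {0}) (UNIV - {0})" unfolding g_def by (rule bij_betw_inv_into[OF bij])
  have gh: "x \<in> UNIV - {0} \<Longrightarrow> g (h x) = x" for x
    unfolding g_def using bij by (simp add: bij_betw_inv_into_left)
  have hg: "x \<in> UNIV - {0} \<Longrightarrow> h (g x) = x" for x
    unfolding g_def using bij by (simp add: bij_betw_inv_into_right)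
  have hin: "x \<noteq> 0 \<Longrightarrow> h x \<noteq> 0" for x using bij by (auto simp: bij_betw_def)
  have gin: "x \<noteq> 0 \<Longrightarrow> g x \<noteq> 0" for x using g by (auto simp: bij_betw_def)
  have "bij_betw (\<lambda>\<gamma>. restrict (h \<circ> \<gamma>) {..<m}) (nz_tuples m) (nz_tuples m)"
  proof (rule bij_betwI[where g = "\<lambda>\<gamma>. restrict (g \<circ> \<gamma>) {..<m}"])
    show "(\<lambda>\<gamma>. restrict (h \<circ> \<gamma>) {..<m}) \<in> nz_tuples m \<rightarrow> nz_tuples m"
      using hin by (auto simp: nz_tuples_def PiE_iff)
    show "(\<lambda>\<gamma>. restrict (g \<circ> \<gamma>) {..<m}) \<in> nz_tuples m \<rightarrow> nz_tuples m"
      using gin by (auto simp: nz_tuples_def PiE_iff)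
    show "restrict (g \<circ> restrict (h \<circ> x) {..<m}) {..<m} = x" if "x \<in> nz_tuples m" for x
    proof (rule ext)
      fix i show "restrict (g \<circ> restrict (h \<circ> x) {..<m}) {..<m} i = x i"
        using that gh by (cases "i < m") (auto simp: nz_tuples_def PiE_iff extensional_def)
    qed
    show "restrict (h \<circ> restrict (g \<circ> x) {..<m}) {..<m} = x" if "x \<in> nz_tuples m" for x
    proof (rule ext)
      fix i show "restrict (h \<circ> restrict (g \<circ> x) {..<m}) {..<m} i = x i"
        using that hg by (cases "i < m") (auto simp: nz_tuples_def PiE_iff extensional_def)
    qed
  qed
  then show ?thesis by (rule sum.reindex_bij_betw[symmetric])
qed

context
  fixes r :: nat
  assumes cardq: "CARD('a::{field,finite}) = 2 ^ r" and rpos: "r > 0"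
begin

lemma sum_lam_tuples: "(\<Sum>\<gamma>\<in>nz_tuples m. lam r (\<Sum>i<m. (\<gamma> i::'a))) = (-1) ^ m"
proof (induction m)
  case 0 then show ?case by (simp add: nz_tuples_def lam0[OF cardq rpos])
next
  case (Suc m)
  have "(\<Sum>\<gamma>\<in>nz_tuples (Suc m). lam r (\<Sum>i<Suc m. (\<gamma> i::'a)))
      = (\<Sum>x\<in>UNIV-{0::'a}. \<Sum>g\<in>nz_tuples m. lam r (\<Sum>i<m. (g i::'a)) * lam r x)"
    by (simp add: sum_tuples_Suc upd_sum lam_add[OF cardq rpos])
  also have "\<dots> = (\<Sum>x\<in>UNIV-{0::'a}. lam r x) * (\<Sum>g\<in>nz_tuples m. lam r (\<Sum>i<m. (g i::'a)))"
    by (simp add: sum_product mult.commute)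
  also have "\<dots> = (-1) ^ Suc m" using Suc sum_lam_nz[OF cardq rpos] by simp
  finally show ?case .
qed

end

context
  fixes r :: nat
  assumes cardq: "CARD('a::{field,finite}) = 2 ^ r" and rpos: "r > 0"
begin

lemma frob_inj: "inj (\<lambda>x::'a. x ^ (2 ^ s))"
proof (rule injI)
  fix x y :: 'a assume "x ^ (2 ^ s) = y ^ (2 ^ s)"
  then have "(x + y) ^ (2 ^ s) = 0" by (simp add: pow2_add[OF cardq rpos] add_self[OF cardq rpos])
  then have "x + y = 0" by simp
  then have "x = - y" by (simp add: eq_neg_iff_add_eq_0)
  then show "x = y" using neg_self[OF cardq rpos, of y] by simp
qed

lemma frob_bij: "bij_betw (\<lambda>x::'a. x ^ (2 ^ s)) (UNIV - {0}) (UNIV - {0})"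
proof -
  have b: "bij (\<lambda>x::'a. x ^ (2 ^ s))"
  proof -
    have "surj (\<lambda>x::'a. x ^ (2 ^ s))" using finite_UNIV_inj_surj[OF _ frob_inj[of s]] by simp
    then show ?thesis unfolding bij_def using frob_inj by blast
  qed
  have "bij_betw (\<lambda>x::'a. x ^ (2 ^ s)) {0} {0}" by simp
  from bij_betw_DiffI[OF b this] show ?thesis by simp
qed

lemma scale_bij:
  assumes "(c::'a) \<noteq> 0"
  shows "bij_betw (\<lambda>x. x / c) (UNIV - {0}) (UNIV - {0})"
  by (rule bij_betw_byWitness[where f' = "\<lambda>x. x * c"]) (use assms in auto)

lemma step1:
  fixes f :: "(nat \<Rightarrow> 'a) \<Rightarrow> 'a"
  shows "real CARD('a) * real (card {\<alpha>\<in>nz_tuples m. f \<alpha> = \<beta>})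
     = (\<Sum>\<alpha>\<in>nz_tuples m. \<Sum>c\<in>UNIV. lam r (c * (f \<alpha> + \<beta>)))"
proof -
  have e: "(f \<alpha> + \<beta> = 0) = (f \<alpha> = \<beta>)" for \<alpha>
  proof -
    have nb: "-\<beta> = \<beta>" by (rule neg_self[OF cardq rpos])
    show ?thesis by (simp only: eq_neg_iff_add_eq_0[symmetric] nb)
  qed
  have "(\<Sum>\<alpha>\<in>nz_tuples m. \<Sum>c\<in>UNIV. lam r (c * (f \<alpha> + \<beta>)))
      = (\<Sum>\<alpha>\<in>nz_tuples m. if f \<alpha> = \<beta> then real CARD('a) else 0)"
    by (rule sum.cong[OF refl]) (simp add: mult.commute[of _ "f _ + \<beta>"] orth[OF cardq rpos] e)
  also have "\<dots> = real CARD('a) * real (card {\<alpha>\<in>nz_tuples m. f \<alpha> = \<beta>})"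
    by (simp add: sum.inter_filter[OF finite_tuples, symmetric])
  finally show ?thesis by simp
qed

lemma step2:
  fixes f :: "(nat \<Rightarrow> 'a) \<Rightarrow> 'a"
  shows "(\<Sum>\<alpha>\<in>nz_tuples m. \<Sum>c\<in>UNIV. lam r (c * (f \<alpha> + \<beta>)))
     = real (card (nz_tuples m :: (nat \<Rightarrow> 'a) set))
       + (\<Sum>c\<in>UNIV-{0}. lam r (c * \<beta>) * (\<Sum>\<alpha>\<in>nz_tuples m. lam r (c * f \<alpha>)))"
proof -
  have "(\<Sum>\<alpha>\<in>nz_tuples m. \<Sum>c\<in>UNIV. lam r (c * (f \<alpha> + \<beta>)))
      = (\<Sum>c\<in>UNIV. \<Sum>\<alpha>\<in>nz_tuples m. lam r (c * (f \<alpha> + \<beta>)))"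
    by (rule sum.swap)
  also have "\<dots> = (\<Sum>c\<in>UNIV. lam r (c * \<beta>) * (\<Sum>\<alpha>\<in>nz_tuples m. lam r (c * f \<alpha>)))"
    by (simp add: distrib_left lam_add[OF cardq rpos] sum_distrib_left mult.commute)
  also have "\<dots> = lam r (0 * \<beta>) * (\<Sum>\<alpha>\<in>nz_tuples m. lam r (0 * f \<alpha>))
      + (\<Sum>c\<in>UNIV-{0}. lam r (c * \<beta>) * (\<Sum>\<alpha>\<in>nz_tuples m. lam r (c * f \<alpha>)))"
    by (rule sum.remove) auto
  also have "lam r (0 * \<beta>) * (\<Sum>\<alpha>\<in>nz_tuples m. lam r (0 * f \<alpha>)) = real (card (nz_tuples m :: (nat \<Rightarrow> 'a) set))"
    by (simp add: lam0[OF cardq rpos])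
  finally show ?thesis .
qed

lemma step3:
  assumes c: "(c::'a) \<noteq> 0"
  shows "(\<Sum>\<alpha>\<in>nz_tuples m. lam r (c * ((\<Sum>i<m. \<alpha> i) + (\<Prod>i<m. inverse (\<alpha> i)))))
     = (\<Sum>\<gamma>\<in>nz_tuples m. lam r (\<Sum>i<m. \<gamma> i) * lam r (c ^ Suc m * (\<Prod>i<m. inverse (\<gamma> i))))"
proof -
  have "(\<Sum>\<alpha>\<in>nz_tuples m. lam r (c * ((\<Sum>i<m. \<alpha> i) + (\<Prod>i<m. inverse (\<alpha> i)))))
    = (\<Sum>\<gamma>\<in>nz_tuples m. lam r (c * ((\<Sum>i<m. restrict ((\<lambda>x. x / c) \<circ> \<gamma>) {..<m} i)
         + (\<Prod>i<m. inverse (restrict ((\<lambda>x. x / c) \<circ> \<gamma>) {..<m} i)))))"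
    by (rule sum_tuples_reindex[OF scale_bij[OF c]])
  also have "\<dots> = (\<Sum>\<gamma>\<in>nz_tuples m. lam r (c * ((\<Sum>i<m. \<gamma> i / c)
         + (\<Prod>i<m. c * inverse (\<gamma> i)))))"
  proof (rule sum.cong[OF refl])
    fix \<gamma> :: "nat \<Rightarrow> 'a"
    have 1: "(\<Sum>i<m. restrict ((\<lambda>x. x / c) \<circ> \<gamma>) {..<m} i) = (\<Sum>i<m. \<gamma> i / c)"
      by (rule sum.cong) auto
    have 2: "(\<Prod>i<m. inverse (restrict ((\<lambda>x. x / c) \<circ> \<gamma>) {..<m} i)) = (\<Prod>i<m. c * inverse (\<gamma> i))"
      by (rule prod.cong) (auto simp: field_simps)
    show "lam r (c * ((\<Sum>i<m. restrict ((\<lambda>x. x / c) \<circ> \<gamma>) {..<m} i)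
         + (\<Prod>i<m. inverse (restrict ((\<lambda>x. x / c) \<circ> \<gamma>) {..<m} i))))
       = lam r (c * ((\<Sum>i<m. \<gamma> i / c) + (\<Prod>i<m. c * inverse (\<gamma> i))))"
      by (simp only: 1 2)
  qed
  also have "\<dots> = (\<Sum>\<gamma>\<in>nz_tuples m. lam r (\<Sum>i<m. \<gamma> i) * lam r (c ^ Suc m * (\<Prod>i<m. inverse (\<gamma> i))))"
  proof (rule sum.cong[OF refl])
    fix \<gamma> :: "nat \<Rightarrow> 'a"
    have 1: "c * (\<Sum>i<m. \<gamma> i / c) = (\<Sum>i<m. \<gamma> i)"
      using c by (simp add: sum_divide_distrib[symmetric])
    have 2: "c * (\<Prod>i<m. c * inverse (\<gamma> i)) = c ^ Suc m * (\<Prod>i<m. inverse (\<gamma> i))"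
      by (simp add: prod.distrib)
    show "lam r (c * ((\<Sum>i<m. \<gamma> i / c) + (\<Prod>i<m. c * inverse (\<gamma> i))))
       = lam r (\<Sum>i<m. \<gamma> i) * lam r (c ^ Suc m * (\<Prod>i<m. inverse (\<gamma> i)))"
      by (simp only: distrib_left 1 2 lam_add[OF cardq rpos])
  qed
  finally show ?thesis .
qed

lemma eq_iff_add0: "((x::'a) + y = 0) = (x = y)"
proof -
  have nb: "-y = y" by (rule neg_self[OF cardq rpos])
  show ?thesis by (simp only: eq_neg_iff_add_eq_0[symmetric] nb)
qed

lemma inner4:
  fixes \<beta> P :: 'a
  shows "(\<Sum>c\<in>UNIV-{0}. lam r (c * \<beta>) * lam r (c ^ (2^s) * P))
     = (if P = \<beta> ^ (2^s) then real CARD('a) - 1 else -1)"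
proof -
  have "(\<Sum>c\<in>UNIV-{0}. lam r (c * \<beta>) * lam r (c ^ (2^s) * P))
      = (\<Sum>c\<in>UNIV-{0::'a}. lam r (c ^ (2^s) * (\<beta> ^ (2^s) + P)))"
  proof (rule sum.cong[OF refl])
    fix c :: 'a
    have "lam r (c * \<beta>) = lam r ((c * \<beta>) ^ (2^s))" by (rule lam_pow2[OF cardq rpos, symmetric])
    then show "lam r (c * \<beta>) * lam r (c ^ (2^s) * P) = lam r (c ^ (2^s) * (\<beta> ^ (2^s) + P))"
      by (simp add: lam_add[OF cardq rpos] distrib_left power_mult_distrib)
  qed
  also have "\<dots> = (\<Sum>u\<in>UNIV-{0::'a}. lam r (u * (\<beta> ^ (2^s) + P)))"
    by (rule sum.reindex_bij_betw[OF frob_bij, where g = "\<lambda>u. lam r (u * (\<beta> ^ (2^s) + P))"])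
  also have "\<dots> = (\<Sum>u\<in>UNIV-{0::'a}. lam r ((\<beta> ^ (2^s) + P) * u))"
    by (simp add: mult.commute)
  also have "\<dots> = (if \<beta> ^ (2^s) + P = 0 then real CARD('a) - 1 else -1)"
    by (rule orth_nz[OF cardq rpos])
  also have "(\<beta> ^ (2^s) + P = 0) = (P = \<beta> ^ (2^s))" using eq_iff_add0 by auto
  finally show ?thesis .
qed

lemma step4:
  assumes nm: "Suc m = 2 ^ s" and odd: "odd m"
  shows "(\<Sum>c\<in>UNIV-{0}. lam r (c * \<beta>) * (\<Sum>\<gamma>\<in>nz_tuples m. lam r (\<Sum>i<m. \<gamma> i) * lam r (c ^ Suc m * (\<Prod>i<m. inverse (\<gamma> i)))))
     = real CARD('a) * (\<Sum>\<gamma>\<in>nz_tuples m. if (\<Prod>i<m. inverse (\<gamma> i)) = \<beta> ^ Suc m then lam r (\<Sum>i<m. (\<gamma> i::'a)) else 0) + 1"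
proof -
  have "(\<Sum>c\<in>UNIV-{0}. lam r (c * \<beta>) * (\<Sum>\<gamma>\<in>nz_tuples m. lam r (\<Sum>i<m. \<gamma> i) * lam r (c ^ Suc m * (\<Prod>i<m. inverse (\<gamma> i)))))
     = (\<Sum>\<gamma>\<in>nz_tuples m. lam r (\<Sum>i<m. \<gamma> i) * (\<Sum>c\<in>UNIV-{0}. lam r (c * \<beta>) * lam r (c ^ Suc m * (\<Prod>i<m. inverse (\<gamma> i)))))"
    by (simp add: sum_distrib_left mult.left_commute sum.swap[where A = "UNIV-{0}"])
  also have "\<dots> = (\<Sum>\<gamma>\<in>nz_tuples m. lam r (\<Sum>i<m. \<gamma> i) * (if (\<Prod>i<m. inverse (\<gamma> i)) = \<beta> ^ Suc m then real CARD('a) - 1 else -1))"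
    unfolding nm by (simp only: inner4)
  also have "\<dots> = (\<Sum>\<gamma>\<in>nz_tuples m. real CARD('a) * (if (\<Prod>i<m. inverse (\<gamma> i)) = \<beta> ^ Suc m then lam r (\<Sum>i<m. \<gamma> i) else 0) - lam r (\<Sum>i<m. \<gamma> i))"
    by (rule sum.cong[OF refl]) (simp add: algebra_simps)
  also have "\<dots> = real CARD('a) * (\<Sum>\<gamma>\<in>nz_tuples m. if (\<Prod>i<m. inverse (\<gamma> i)) = \<beta> ^ Suc m then lam r (\<Sum>i<m. (\<gamma> i::'a)) else 0)
      - (\<Sum>\<gamma>\<in>nz_tuples m. lam r (\<Sum>i<m. (\<gamma> i::'a)))"
    by (simp add: sum_subtractf sum_distrib_left)
  also have "(\<Sum>\<gamma>\<in>nz_tuples m. lam r (\<Sum>i<m. (\<gamma> i::'a))) = -1"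
    using sum_lam_tuples[OF cardq rpos, of m] odd by simp
  finally show ?thesis by simp
qed

lemma step5_zero:
  "(\<Sum>\<gamma>\<in>nz_tuples m. if (\<Prod>i<m. inverse (\<gamma> i)) = (0::'a) ^ Suc m then lam r (\<Sum>i<m. (\<gamma> i::'a)) else 0) = 0"
proof (rule sum.neutral, rule ballI)
  fix \<gamma> :: "nat \<Rightarrow> 'a" assume g: "\<gamma> \<in> nz_tuples m"
  have "(\<Prod>i<m. inverse (\<gamma> i)) \<noteq> 0" using nz_tuples_nz[OF g] by simp
  then show "(if (\<Prod>i<m. inverse (\<gamma> i)) = (0::'a) ^ Suc m then lam r (\<Sum>i<m. (\<gamma> i::'a)) else 0) = 0" by simp
qed

lemma step5:
  assumes nm: "Suc m = 2 ^ s"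
  shows "(\<Sum>\<gamma>\<in>nz_tuples m. if (\<Prod>i<m. inverse (\<gamma> i)) = \<beta> ^ Suc m then lam r (\<Sum>i<m. (\<gamma> i::'a)) else 0)
    = (\<Sum>\<delta>\<in>nz_tuples m. if (\<Prod>i<m. inverse (\<delta> i)) = \<beta> then lam r (\<Sum>i<m. (\<delta> i::'a)) else 0)"
proof -
  let ?h = "\<lambda>x::'a. x ^ (2 ^ s)"
  have "(\<Sum>\<gamma>\<in>nz_tuples m. if (\<Prod>i<m. inverse (\<gamma> i)) = \<beta> ^ Suc m then lam r (\<Sum>i<m. (\<gamma> i::'a)) else 0)
    = (\<Sum>\<delta>\<in>nz_tuples m. if (\<Prod>i<m. inverse (restrict (?h \<circ> \<delta>) {..<m} i)) = \<beta> ^ Suc m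
         then lam r (\<Sum>i<m. restrict (?h \<circ> \<delta>) {..<m} i) else 0)"
    by (rule sum_tuples_reindex[OF frob_bij])
  also have "\<dots> = (\<Sum>\<delta>\<in>nz_tuples m. if (\<Prod>i<m. inverse (\<delta> i)) = \<beta> then lam r (\<Sum>i<m. (\<delta> i::'a)) else 0)"
  proof (rule sum.cong[OF refl])
    fix \<delta> :: "nat \<Rightarrow> 'a"
    have 1: "(\<Prod>i<m. inverse (restrict (?h \<circ> \<delta>) {..<m} i)) = (\<Prod>i<m. inverse (\<delta> i)) ^ (2^s)"
      by (simp add: prod_power_distrib power_inverse)
    have 2: "(\<Sum>i<m. restrict (?h \<circ> \<delta>) {..<m} i) = (\<Sum>i<m. \<delta> i) ^ (2^s)"
      by (simp add: pow2_sum[OF cardq rpos])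
    have 3: "((\<Prod>i<m. inverse (\<delta> i)) ^ (2^s) = \<beta> ^ (2^s)) = ((\<Prod>i<m. inverse (\<delta> i)) = \<beta>)"
      using frob_inj[of s] by (auto dest: injD)
    show "(if (\<Prod>i<m. inverse (restrict (?h \<circ> \<delta>) {..<m} i)) = \<beta> ^ Suc m
         then lam r (\<Sum>i<m. restrict (?h \<circ> \<delta>) {..<m} i) else 0)
       = (if (\<Prod>i<m. inverse (\<delta> i)) = \<beta> then lam r (\<Sum>i<m. (\<delta> i::'a)) else 0)"
      unfolding 1 2 nm 3 lam_pow2[OF cardq rpos] ..
  qed
  finally show ?thesis .
qed

lemma step6:
  assumes b: "(\<beta>::'a) \<noteq> 0"
  shows "(\<Sum>\<delta>\<in>nz_tuples (Suc k). if (\<Prod>i<Suc k. inverse (\<delta> i)) = \<beta> then lam r (\<Sum>i<Suc k. (\<delta> i::'a)) else 0)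
     = (\<Sum>g\<in>nz_tuples k. lam r ((\<Sum>i<k. g i) + inverse \<beta> * (\<Prod>i<k. inverse (g i))))"
proof -
  have "(\<Sum>\<delta>\<in>nz_tuples (Suc k). if (\<Prod>i<Suc k. inverse (\<delta> i)) = \<beta> then lam r (\<Sum>i<Suc k. (\<delta> i::'a)) else 0)
     = (\<Sum>x\<in>UNIV-{0::'a}. \<Sum>g\<in>nz_tuples k. if (\<Prod>i<k. inverse (g i)) * inverse x = \<beta> then lam r ((\<Sum>i<k. g i) + x) else 0)"
    by (simp only: sum_tuples_Suc upd_sum upd_prod2)
  also have "\<dots> = (\<Sum>g\<in>nz_tuples k. \<Sum>x\<in>UNIV-{0::'a}. if (\<Prod>i<k. inverse (g i)) * inverse x = \<beta> then lam r ((\<Sum>i<k. g i) + x) else 0)"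
    by (rule sum.swap)
  also have "\<dots> = (\<Sum>g\<in>nz_tuples k. lam r ((\<Sum>i<k. g i) + inverse \<beta> * (\<Prod>i<k. inverse (g i))))"
  proof (rule sum.cong[OF refl])
    fix g :: "nat \<Rightarrow> 'a" assume g: "g \<in> nz_tuples k"
    define P where "P = (\<Prod>i<k. inverse (g i))"
    have P: "P \<noteq> 0" using nz_tuples_nz[OF g] by (simp add: P_def)
    have "(\<Sum>x\<in>UNIV-{0::'a}. if P * inverse x = \<beta> then lam r ((\<Sum>i<k. g i) + x) else 0)
       = (\<Sum>x\<in>UNIV-{0::'a}. if x = inverse \<beta> * P then lam r ((\<Sum>i<k. g i) + x) else 0)"
    proof (rule sum.cong[OF refl])
      fix x :: 'a assume "x \<in> UNIV - {0}"
      then have x: "x \<noteq> 0" by simp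
      have "(P * inverse x = \<beta>) = (x = inverse \<beta> * P)"
        using x b P by (auto simp: field_simps)
      then show "(if P * inverse x = \<beta> then lam r ((\<Sum>i<k. g i) + x) else 0)
        = (if x = inverse \<beta> * P then lam r ((\<Sum>i<k. g i) + x) else 0)" by simp
    qed
    also have "\<dots> = lam r ((\<Sum>i<k. g i) + inverse \<beta> * P)"
      using b P by (simp add: sum.delta)
    finally show "(\<Sum>x\<in>UNIV-{0::'a}. if (\<Prod>i<k. inverse (g i)) * inverse x = \<beta> then lam r ((\<Sum>i<k. g i) + x) else 0)
       = lam r ((\<Sum>i<k. g i) + inverse \<beta> * (\<Prod>i<k. inverse (g i)))" by (simp add: P_def)
  qed
  finally show ?thesis .
qed

lemma step7: "(\<Sum>g\<in>nz_tuples k. lam r ((\<Sum>i<k. g i) + a * (\<Prod>i<k. inverse (g i)))) = Kl r k (a::'a)"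
  by (cases "k = 0") (simp_all add: Kl_def nz_tuples_def)

lemma key:
  assumes nm: "Suc m = 2 ^ s" and odd: "odd m"
  shows "real CARD('a) * real (delta m \<beta>) = real ((CARD('a) - 1) ^ m) + 1
     + real CARD('a) * (\<Sum>\<gamma>\<in>nz_tuples m. if (\<Prod>i<m. inverse (\<gamma> i)) = \<beta> ^ Suc m then lam r (\<Sum>i<m. (\<gamma> i::'a)) else 0)"
proof -
  let ?f = "\<lambda>\<alpha>::nat \<Rightarrow> 'a. (\<Sum>i<m. \<alpha> i) + (\<Prod>i<m. inverse (\<alpha> i))"
  have "real CARD('a) * real (delta m \<beta>) = (\<Sum>\<alpha>\<in>nz_tuples m. \<Sum>c\<in>UNIV. lam r (c * (?f \<alpha> + \<beta>)))"
    unfolding delta_def by (rule step1)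
  also have "\<dots> = real (card (nz_tuples m :: (nat \<Rightarrow> 'a) set))
       + (\<Sum>c\<in>UNIV-{0}. lam r (c * \<beta>) * (\<Sum>\<alpha>\<in>nz_tuples m. lam r (c * ?f \<alpha>)))"
    by (rule step2)
  also have "(\<Sum>c\<in>UNIV-{0}. lam r (c * \<beta>) * (\<Sum>\<alpha>\<in>nz_tuples m. lam r (c * ?f \<alpha>)))
     = (\<Sum>c\<in>UNIV-{0}. lam r (c * \<beta>) * (\<Sum>\<gamma>\<in>nz_tuples m. lam r (\<Sum>i<m. \<gamma> i) * lam r (c ^ Suc m * (\<Prod>i<m. inverse (\<gamma> i)))))"
    by (rule sum.cong[OF refl]) (simp add: step3)
  also have "\<dots> = real CARD('a) * (\<Sum>\<gamma>\<in>nz_tuples m. if (\<Prod>i<m. inverse (\<gamma> i)) = \<beta> ^ Suc m then lam r (\<Sum>i<m. (\<gamma> i::'a)) else 0) + 1"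
    by (rule step4[OF nm odd])
  finally show ?thesis by (simp add: card_tuples)
qed

end

theorem proposition11:
  fixes n s r q :: nat
  assumes "s > 0" "r > 0" "n = 2 ^ s" "q = 2 ^ r" "CARD('a::{field,finite}) = q"
  shows "real (delta (n - 1) (0::'a)) = ((real q - 1) ^ (n - 1) + 1) / real q
         \<and> (\<forall>\<beta>::'a. \<beta> \<noteq> 0 \<longrightarrow>
         real (delta (n - 1) \<beta>) = Kl r (n - 2) (inverse \<beta>) + ((real q - 1) ^ (n - 1) + 1) / real q)"
proof -
  note cq = assms(5)[unfolded assms(4)]
  note rp = assms(2)
  define m where "m = n - 1"
  have n1: "n \<ge> 1" using assms(3) by simp
  have nm: "Suc m = 2 ^ s" using n1 assms(3) by (simp add: m_def)
  have ev: "even n" using assms(1,3) by simp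
  have odd: "odd m" using ev n1 unfolding m_def by (cases n) auto
  have qpos: "real q > 0" using assms(4) by simp
  have cm: "real ((CARD('a) - 1) ^ m) = (real q - 1) ^ m"
    using assms(5) assms(4) by (simp add: of_nat_diff)
  define S where "S = (\<lambda>\<beta>::'a. \<Sum>\<gamma>\<in>nz_tuples m. if (\<Prod>i<m. inverse (\<gamma> i)) = \<beta> ^ Suc m then lam r (\<Sum>i<m. (\<gamma> i::'a)) else 0)"
  have K: "real q * real (delta m \<beta>) = (real q - 1) ^ m + 1 + real q * S \<beta>" for \<beta> :: 'a
    using key[OF cq rp nm odd, of \<beta>] cm assms(5) by (simp add: S_def)
  have S0: "S 0 = 0" unfolding S_def by (rule step5_zero[OF cq rp])
  obtain k where mk: "m = Suc k" using odd by (cases m) auto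
  have k2: "n - 2 = k" using mk m_def by simp
  have Sb: "S \<beta> = Kl r (n - 2) (inverse \<beta>)" if b: "\<beta> \<noteq> 0" for \<beta> :: 'a
  proof -
    have "S \<beta> = (\<Sum>\<delta>\<in>nz_tuples m. if (\<Prod>i<m. inverse (\<delta> i)) = \<beta> then lam r (\<Sum>i<m. (\<delta> i::'a)) else 0)"
      unfolding S_def by (rule step5[OF cq rp nm])
    also have "\<dots> = (\<Sum>g\<in>nz_tuples k. lam r ((\<Sum>i<k. g i) + inverse \<beta> * (\<Prod>i<k. inverse (g i))))"
      unfolding mk by (rule step6[OF cq rp b])
    also have "\<dots> = Kl r k (inverse \<beta>)" by (rule step7[OF cq rp])
    finally show ?thesis by (simp add: k2)
  qed
  have D: "real (delta m \<beta>) = ((real q - 1) ^ m + 1) / real q + S \<beta>" for \<beta> :: 'a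
    using K[of \<beta>] qpos by (simp add: field_simps)
  show ?thesis
    using D[of 0] S0 D Sb unfolding m_def by auto
qed

end
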